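(* In the algorithm DMA, let $\alpha_t\ge1$ be the maximum number of packets that a server needs to send or receive at time slot $t$ in the merged schedule of Step 3. Then for every $t\in[0,(\mu+1/\beta)\Delta]$, $\mathbb{E}[\alpha_t]=O(g(m))$, where $g(m)=\log(m)/\log(\log(m))$.
   Context: Model. $m$ servers, each a sender and a receiver. A coflow is an $m\times m$ nonnegative integer matrix $(d_{sr})$ of unit packets from sender $s$ to receiver $r$. Each job $j\in\mathcal{N}$ has $\mu_j$ coflows $\mathcal{D}^{(cj)}$ and a DAG $G_j$ (edge $c_1\to c_2$: $c_2$ may not start before $c_1$ finishes). Each slot, each sender sends at most one and each receiver receives at most one packet. $\mu=\max_j\mu_j$. Effective size of a coflow: $D=\max\{\max_s\sum_rd_{sr},\max_r\sum_sd_{sr}\}$; $\Delta$ is the effective size of $\sum_j\sum_c\mathcal{D}^{(cj)}$. BNA: polynomial-time procedure scheduling all packets of a coflow of effective size $D$ feasibly in $D$ consecutive slots. Algorithm DMA (constant $\beta>1/e$): Step 1: for each job, schedule its coflows one after another in a topological order of $G_j$, each with BNA, starting at time $0$. Step 2: delay each job's schedule by an independent uniformly random integer in $[0,\Delta/\beta]$. Step 3: merge the delayed schedules slot by slot (capacity constraints may be violated). Step 4: replace each slot $t$ by $\alpha_t$ slots scheduled feasibly with BNA. *)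

theory Defs
  imports Complex_Main "HOL-Library.FuncSet"
begin

text \<open>Servers are 0..<m (each a sender and a receiver). A coflow is a matrix
  d :: nat => nat => nat, d s r = number of unit packets from sender s to receiver r
  (only entries with s,r < m are relevant).\<close>

definition eff_size :: "nat \<Rightarrow> (nat \<Rightarrow> nat \<Rightarrow> nat) \<Rightarrow> nat" where
  "eff_size m d =
     max (Max (insert 0 {\<Sum>r<m. d s r | s. s < m}))
         (Max (insert 0 {\<Sum>s<m. d s r | r. r < m}))"

text \<open>Delta: effective size of the sum of all coflows of all jobs.
  Job j has coflows d j c for c < mu j.\<close>
definition total_eff :: "nat \<Rightarrow> 'j set \<Rightarrow> ('j \<Rightarrow> nat) \<Rightarrow> ('j \<Rightarrow> nat \<Rightarrow> nat \<Rightarrow> nat \<Rightarrow> nat) \<Rightarrow> nat" where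
  "total_eff m N mu d = eff_size m (\<lambda>s r. \<Sum>j\<in>N. \<Sum>c<mu j. d j c s r)"

text \<open>Start slot of coflow c of job j in the Step 1 schedule: coflows are scheduled
  back to back in the topological order given by positions pos j (a permutation of 0..<mu j),
  each coflow occupying exactly its effective size many consecutive slots.\<close>
definition start_slot :: "nat \<Rightarrow> ('j \<Rightarrow> nat) \<Rightarrow> ('j \<Rightarrow> nat \<Rightarrow> nat \<Rightarrow> nat \<Rightarrow> nat)
     \<Rightarrow> ('j \<Rightarrow> nat \<Rightarrow> nat) \<Rightarrow> 'j \<Rightarrow> nat \<Rightarrow> nat" where
  "start_slot m mu d pos j c = (\<Sum>c'\<in>{c'. c' < mu j \<and> pos j c' < pos j c}. eff_size m (d j c'))"

text \<open>E j is the edge set of the DAG G_j on coflows 0..<mu j;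
  pos j is a topological order (pos j c = position of c); sigma j c t s r is the number of
  packets of coflow c of job j sent from s to r in slot t of job j's (undelayed) Step 1 schedule,
  which is a feasible (BNA-type) schedule of that coflow inside its window of D consecutive slots.\<close>
definition step1_schedule ::
  "nat \<Rightarrow> 'j set \<Rightarrow> ('j \<Rightarrow> nat) \<Rightarrow> ('j \<Rightarrow> nat \<Rightarrow> nat \<Rightarrow> nat \<Rightarrow> nat) \<Rightarrow> ('j \<Rightarrow> (nat \<times> nat) set)
   \<Rightarrow> ('j \<Rightarrow> nat \<Rightarrow> nat) \<Rightarrow> ('j \<Rightarrow> nat \<Rightarrow> nat \<Rightarrow> nat \<Rightarrow> nat \<Rightarrow> nat) \<Rightarrow> bool" where
  "step1_schedule m N mu d E pos sigma \<longleftrightarrow>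
     (\<forall>j\<in>N.
        E j \<subseteq> {0..<mu j} \<times> {0..<mu j} \<and> acyclic (E j) \<and>
        bij_betw (pos j) {0..<mu j} {0..<mu j} \<and>
        (\<forall>(c1, c2)\<in>E j. pos j c1 < pos j c2) \<and>
        (\<forall>c<mu j.
           let S = start_slot m mu d pos j c; D = eff_size m (d j c) in
           (\<forall>t s r. (t < S \<or> S + D \<le> t) \<longrightarrow> sigma j c t s r = 0) \<and>
           (\<forall>s<m. \<forall>r<m. (\<Sum>t\<in>{S..<S+D}. sigma j c t s r) = d j c s r) \<and>
           (\<forall>t. (\<forall>s<m. (\<Sum>r<m. sigma j c t s r) \<le> 1) \<and>
                (\<forall>r<m. (\<Sum>s<m. sigma j c t s r) \<le> 1))))"

text \<open>Step 2/3: with delay vector x, the merged schedule; number of packets server s sends /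
  receives in slot t.\<close>
definition send_load ::
  "nat \<Rightarrow> 'j set \<Rightarrow> ('j \<Rightarrow> nat) \<Rightarrow> ('j \<Rightarrow> nat \<Rightarrow> nat \<Rightarrow> nat \<Rightarrow> nat \<Rightarrow> nat) \<Rightarrow> ('j \<Rightarrow> nat)
   \<Rightarrow> nat \<Rightarrow> nat \<Rightarrow> nat" where
  "send_load m N mu sigma x t s =
     (\<Sum>j\<in>N. \<Sum>c<mu j. \<Sum>r<m. if x j \<le> t then sigma j c (t - x j) s r else 0)"

definition recv_load ::
  "nat \<Rightarrow> 'j set \<Rightarrow> ('j \<Rightarrow> nat) \<Rightarrow> ('j \<Rightarrow> nat \<Rightarrow> nat \<Rightarrow> nat \<Rightarrow> nat \<Rightarrow> nat) \<Rightarrow> ('j \<Rightarrow> nat)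
   \<Rightarrow> nat \<Rightarrow> nat \<Rightarrow> nat" where
  "recv_load m N mu sigma x t r =
     (\<Sum>j\<in>N. \<Sum>c<mu j. \<Sum>s<m. if x j \<le> t then sigma j c (t - x j) s r else 0)"

definition alpha ::
  "nat \<Rightarrow> 'j set \<Rightarrow> ('j \<Rightarrow> nat) \<Rightarrow> ('j \<Rightarrow> nat \<Rightarrow> nat \<Rightarrow> nat \<Rightarrow> nat \<Rightarrow> nat) \<Rightarrow> ('j \<Rightarrow> nat)
   \<Rightarrow> nat \<Rightarrow> nat" where
  "alpha m N mu sigma x t =
     max 1 (Max (insert 0 ({send_load m N mu sigma x t i | i. i < m} \<union>
                            {recv_load m N mu sigma x t i | i. i < m})))"

text \<open>Maximum delay: delays are uniform integers in [0, Delta/beta], i.e. in 0..floor(Delta/beta).\<close>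
definition max_delay :: "real \<Rightarrow> nat \<Rightarrow> nat" where
  "max_delay \<beta> \<Delta> = nat \<lfloor>real \<Delta> / \<beta>\<rfloor>"

text \<open>Expectation of alpha_t over independent uniform delays x j \<in> {0..L}, j \<in> N.\<close>
definition expected_alpha ::
  "real \<Rightarrow> nat \<Rightarrow> 'j set \<Rightarrow> ('j \<Rightarrow> nat) \<Rightarrow> ('j \<Rightarrow> nat \<Rightarrow> nat \<Rightarrow> nat \<Rightarrow> nat)
   \<Rightarrow> ('j \<Rightarrow> nat \<Rightarrow> nat \<Rightarrow> nat \<Rightarrow> nat \<Rightarrow> nat) \<Rightarrow> nat \<Rightarrow> real" where
  "expected_alpha \<beta> m N mu d sigma t =
     (let L = max_delay \<beta> (total_eff m N mu d);
          X = PiE N (\<lambda>_. {0..L})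
      in (\<Sum>x\<in>X. real (alpha m N mu sigma x t)) / real (card X))"

end

theory Submission
  imports Defs "HOL-Real_Asymp.Real_Asymp"
begin

lemma sum_PiE_insert:
  assumes "a \<notin> S"
  shows "(\<Sum>x\<in>PiE (insert a S) T. G x) = (\<Sum>v\<in>T a. \<Sum>x\<in>PiE S T. G (x(a:=v)))"
proof -
  have "(\<Sum>x\<in>PiE (insert a S) T. G x) = (\<Sum>p\<in>T a \<times> PiE S T. G ((\<lambda>(y, g). g(a := y)) p))"
    unfolding PiE_insert_eq by (subst sum.reindex[OF inj_combinator[OF assms]]) (simp add: comp_def)
  also have "\<dots> = (\<Sum>v\<in>T a. \<Sum>x\<in>PiE S T. G (x(a:=v)))"
    by (simp add: sum.cartesian_product split_def)
  finally show ?thesis .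
qed

lemma pascal_b:
  assumes "b \<le> (1::nat)"
  shows "(Y + b) choose Suc k = (Y choose Suc k) + b * (Y choose k)"
proof (cases "b = 0")
  case False then have "b = 1" using assms by simp
  then show ?thesis by simp
qed simp

lemma bernoulli_like:
  fixes s p :: real
  assumes "0 \<le> s" "0 \<le> p"
  shows "s ^ Suc n + real (Suc n) * p * s ^ n \<le> (s + p) ^ Suc n"
proof (induction n)
  case 0 then show ?case by simp
next
  case (Suc n)
  have "(s + p) ^ Suc (Suc n) = (s + p) * (s + p) ^ Suc n" by simp
  also have "\<dots> \<ge> (s + p) * (s ^ Suc n + real (Suc n) * p * s ^ n)"
    using Suc assms by (intro mult_left_mono) auto
  finally have *: "(s + p) * (s ^ Suc n + real (Suc n) * p * s ^ n) \<le> (s + p) ^ Suc (Suc n)" .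
  have "s ^ Suc (Suc n) + real (Suc (Suc n)) * p * s ^ Suc n \<le> (s + p) * (s ^ Suc n + real (Suc n) * p * s ^ n)"
    using assms by (simp add: algebra_simps)
  then show ?case using * by linarith
qed

lemma alg_aux:
  fixes M c k A s sk na :: real
  assumes "M > 0" "c > 0" "k > 0"
  shows "M * (A * (s * sk) / (k * c)) + na * (A * sk / c) =
         A * M / (k * c) * (s * sk + k * (na / M) * sk)"
  using assms by (simp add: field_simps)

lemma binom_moment:
  fixes f :: "'j \<Rightarrow> nat \<Rightarrow> nat" and L :: nat
  assumes "finite N" "\<forall>j\<in>N. \<forall>v. f j v \<le> 1"
  shows "(\<Sum>x\<in>PiE N (\<lambda>_. {0..L}). real ((\<Sum>j\<in>N. f j (x j)) choose k))
     \<le> real (Suc L) ^ card N * (\<Sum>j\<in>N. real (\<Sum>v\<in>{0..L}. f j v) / real (Suc L)) ^ k / fact k"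
  using assms
proof (induction N arbitrary: k rule: finite_induct)
  case empty
  then show ?case by (cases k) auto
next
  case (insert a N)
  define M where "M = real (Suc L)"
  define s where "s = (\<Sum>j\<in>N. real (\<Sum>v\<in>{0..L}. f j v) / real (Suc L))"
  define na where "na = real (\<Sum>v\<in>{0..L}. f a v)"
  define p where "p = na / M"
  define F where "F = (\<lambda>k. (\<Sum>x\<in>PiE N (\<lambda>_. {0..L}). real ((\<Sum>j\<in>N. f j (x j)) choose k)))"
  have IH: "F k \<le> M ^ card N * s ^ k / fact k" for k
    using insert unfolding F_def M_def s_def by auto
  have Mpos: "M > 0" unfolding M_def by simp
  have s0: "s \<ge> 0" unfolding s_def by (intro sum_nonneg divide_nonneg_nonneg) (auto intro: sum_nonneg)
  have p0: "p \<ge> 0" unfolding p_def na_def M_def by (intro divide_nonneg_nonneg) (auto intro: sum_nonneg)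
  have fa: "f a v \<le> 1" for v using insert by auto
  have sumins: "(\<Sum>j\<in>insert a N. f j ((x(a:=v)) j)) = f a v + (\<Sum>j\<in>N. f j (x j))" for x v
  proof -
    have "(\<Sum>j\<in>N. f j ((x(a:=v)) j)) = (\<Sum>j\<in>N. f j (x j))"
      using insert(2) by (intro sum.cong) auto
    then show ?thesis using insert(1,2) by simp
  qed
  have LHS: "(\<Sum>x\<in>PiE (insert a N) (\<lambda>_. {0..L}). real ((\<Sum>j\<in>insert a N. f j (x j)) choose k))
     = (\<Sum>v\<in>{0..L}. \<Sum>x\<in>PiE N (\<lambda>_. {0..L}). real (((\<Sum>j\<in>N. f j (x j)) + f a v) choose k))"
    by (subst sum_PiE_insert[OF insert(2)]) (simp only: sumins add.commute)
  have cardN: "card (insert a N) = Suc (card N)" using insert by simp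
  have sins: "(\<Sum>j\<in>insert a N. real (\<Sum>v\<in>{0..L}. f j v) / real (Suc L)) = s + p"
    using insert(1,2) unfolding s_def p_def na_def M_def by simp
  show ?case
  proof (cases k)
    case 0
    have "card (PiE (insert a N) (\<lambda>_. {0..L::nat})) = Suc L ^ card (insert a N)"
      using insert by (simp add: card_PiE)
    then show ?thesis using 0 by simp
  next
    case (Suc k')
    have "(\<Sum>v\<in>{0..L}. \<Sum>x\<in>PiE N (\<lambda>_. {0..L}). real (((\<Sum>j\<in>N. f j (x j)) + f a v) choose k))
        = (\<Sum>v\<in>{0..L}. F (Suc k') + real (f a v) * F k')"
      unfolding F_def Suc
      by (intro sum.cong refl) (simp add: pascal_b[OF fa] sum.distrib sum_distrib_left)
    also have "\<dots> = M * F (Suc k') + na * F k'"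
      unfolding M_def na_def by (simp add: sum.distrib sum_distrib_right)
    also have "\<dots> \<le> M * (M ^ card N * s ^ Suc k' / fact (Suc k')) + na * (M ^ card N * s ^ k' / fact k')"
      using IH[of "Suc k'"] IH[of k'] Mpos unfolding na_def by (intro add_mono mult_left_mono) (auto simp del: fact_Suc of_nat_sum)
    also have "\<dots> = M ^ Suc (card N) / fact (Suc k') * (s ^ Suc k' + real (Suc k') * p * s ^ k')"
    proof -
      have fk: "(fact k' :: real) > 0" by simp
      have "(fact (Suc k') :: real) = (1 + real k') * fact k'" by (simp add: fact_Suc)
      have "M * (M ^ card N * s ^ Suc k' / fact (Suc k')) + na * (M ^ card N * s ^ k' / fact k')
         = M * (M ^ card N * (s * s ^ k') / ((1 + real k') * fact k')) + na * (M ^ card N * s ^ k' / fact k')"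
        using \<open>fact (Suc k') = _\<close> by (simp only: power_Suc)
      also have "\<dots> = M ^ card N * M / ((1 + real k') * fact k') * (s * s ^ k' + (1 + real k') * (na / M) * s ^ k')"
        by (rule alg_aux[OF Mpos fk]) simp
      also have "\<dots> = M ^ Suc (card N) / fact (Suc k') * (s ^ Suc k' + real (Suc k') * p * s ^ k')"
        unfolding p_def using \<open>fact (Suc k') = _\<close> by (simp add: mult.commute)
      finally show ?thesis .
    qed
    also have "\<dots> \<le> M ^ Suc (card N) / fact (Suc k') * (s + p) ^ Suc k'"
      using bernoulli_like[OF s0 p0] Mpos by (intro mult_left_mono) auto
    finally have R: "(\<Sum>v\<in>{0..L}. \<Sum>x\<in>PiE N (\<lambda>_. {0..L}). real (((\<Sum>j\<in>N. f j (x j)) + f a v) choose k))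
       \<le> M ^ Suc (card N) * (s + p) ^ Suc k' / fact (Suc k')" unfolding times_divide_eq_left .
    show ?thesis unfolding LHS cardN sins using R unfolding Suc M_def .
  qed
qed

lemma one_active:
  fixes tau :: "nat \<Rightarrow> nat \<Rightarrow> nat \<Rightarrow> nat" and S D :: "nat \<Rightarrow> nat"
  assumes win: "\<forall>c<\<mu>. \<forall>y r. (y < S c \<or> S c + D c \<le> y) \<longrightarrow> tau c y r = 0"
    and disj: "\<forall>c1<\<mu>. \<forall>c2<\<mu>. c1 \<noteq> c2 \<longrightarrow> S c1 + D c1 \<le> S c2 \<or> S c2 + D c2 \<le> S c1"
    and cap: "\<forall>c<\<mu>. \<forall>y. (\<Sum>r<m. tau c y r) \<le> 1"
  shows "(\<Sum>c<\<mu>. \<Sum>r<m. tau c y r) \<le> 1"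
proof (cases "\<exists>c<\<mu>. S c \<le> y \<and> y < S c + D c")
  case True
  then obtain c where c: "c < \<mu>" "S c \<le> y" "y < S c + D c" by blast
  have "(\<Sum>c<\<mu>. \<Sum>r<m. tau c y r) = (\<Sum>c'\<in>{c}. \<Sum>r<m. tau c' y r)"
  proof (rule sum.mono_neutral_right)
    show "\<forall>i\<in>{..<\<mu>} - {c}. (\<Sum>r<m. tau i y r) = 0"
    proof
      fix c' assume "c' \<in> {..<\<mu>} - {c}"
      then have "c' < \<mu>" "c' \<noteq> c" by auto
      then have "y < S c' \<or> S c' + D c' \<le> y" using disj c by fastforce
      then show "(\<Sum>r<m. tau c' y r) = 0" using win \<open>c' < \<mu>\<close> by auto
    qed
  qed (use c in auto)
  then show ?thesis using cap c by simp
next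
  case False
  have "tau c y r = 0" if "c < \<mu>" for c r
    using False win that by (meson not_le)
  then have "(\<Sum>c<\<mu>. \<Sum>r<m. tau c y r) = 0" by simp
  then show ?thesis by simp
qed

lemma total_bound:
  fixes tau :: "nat \<Rightarrow> nat \<Rightarrow> nat \<Rightarrow> nat" and S D :: "nat \<Rightarrow> nat"
  assumes win: "\<forall>c<\<mu>. \<forall>y r. (y < S c \<or> S c + D c \<le> y) \<longrightarrow> tau c y r = 0"
    and sums: "\<forall>c<\<mu>. \<forall>r<m. (\<Sum>y\<in>{S c..<S c + D c}. tau c y r) = dd c r"
  shows "(\<Sum>v\<in>{0..L}. if v \<le> t then (\<Sum>c<\<mu>. \<Sum>r<m. tau c (t - v) r) else 0) \<le> (\<Sum>c<\<mu>. \<Sum>r<m. dd c r)"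
proof -
  define a where "a = (\<lambda>y. \<Sum>c<\<mu>. \<Sum>r<m. tau c y r)"
  define B where "B = {0..L} \<inter> {..t}"
  have "(\<Sum>v\<in>{0..L}. if v \<le> t then a (t - v) else 0) = (\<Sum>v\<in>B. if v \<le> t then a (t - v) else 0)"
    unfolding B_def by (rule sum.mono_neutral_right) auto
  also have "\<dots> = (\<Sum>v\<in>B. a (t - v))" unfolding B_def by (rule sum.cong) auto
  also have "\<dots> = (\<Sum>y\<in>(\<lambda>v. t - v) ` B. a y)"
    by (rule sum.reindex[symmetric, unfolded comp_def]) (auto simp: inj_on_def B_def)
  also have "\<dots> \<le> (\<Sum>y\<in>{0..t}. a y)"
    by (rule sum_mono2) (auto simp: B_def)
  also have "\<dots> = (\<Sum>c<\<mu>. \<Sum>r<m. \<Sum>y\<in>{0..t}. tau c y r)"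
    unfolding a_def by (simp add: sum.swap[of _ "{0..t}"])
  also have "\<dots> \<le> (\<Sum>c<\<mu>. \<Sum>r<m. dd c r)"
  proof (intro sum_mono)
    fix c r assume c: "c \<in> {..<\<mu>}" and r: "r \<in> {..<m}"
    have "(\<Sum>y\<in>{0..t}. tau c y r) = (\<Sum>y\<in>{0..t} \<inter> {S c..<S c + D c}. tau c y r)"
    proof (rule sum.mono_neutral_right)
      show "\<forall>i\<in>{0..t} - {0..t} \<inter> {S c..<S c + D c}. tau c i r = 0"
        using win c by (metis DiffE IntI atLeastLessThan_iff lessThan_iff not_le)
    qed auto
    also have "\<dots> \<le> (\<Sum>y\<in>{S c..<S c + D c}. tau c y r)" by (rule sum_mono2) auto
    also have "\<dots> = dd c r" using sums c r by auto
    finally show "(\<Sum>y\<in>{0..t}. tau c y r) \<le> dd c r" .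
  qed
  finally show ?thesis unfolding a_def .
qed

lemma window_order:
  assumes "c1 < mu j" "c2 < mu j" "pos j c1 < pos j c2"
  shows "start_slot m mu d pos j c1 + eff_size m (d j c1) \<le> start_slot m mu d pos j c2"
proof -
  define A1 where "A1 = {c'. c' < mu j \<and> pos j c' < pos j c1}"
  define A2 where "A2 = {c'. c' < mu j \<and> pos j c' < pos j c2}"
  have fin: "finite A2" unfolding A2_def by auto
  have sub: "insert c1 A1 \<subseteq> A2" using assms unfolding A1_def A2_def by auto
  have "c1 \<notin> A1" unfolding A1_def by auto
  moreover have "finite A1" unfolding A1_def by auto
  ultimately have "(\<Sum>c'\<in>insert c1 A1. eff_size m (d j c')) = eff_size m (d j c1) + (\<Sum>c'\<in>A1. eff_size m (d j c'))"
    by simp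
  moreover have "(\<Sum>c'\<in>insert c1 A1. eff_size m (d j c')) \<le> (\<Sum>c'\<in>A2. eff_size m (d j c'))"
    by (rule sum_mono2[OF fin sub]) auto
  ultimately show ?thesis unfolding start_slot_def A1_def A2_def by simp
qed

lemma eff_row: "i < m \<Longrightarrow> (\<Sum>r<m. D i r) \<le> eff_size m D"
  unfolding eff_size_def
  by (rule le_trans[OF _ max.cobounded1], rule Max_ge) auto

lemma eff_col: "i < m \<Longrightarrow> (\<Sum>s<m. D s i) \<le> eff_size m D"
  unfolding eff_size_def
  by (rule le_trans[OF _ max.cobounded2], rule Max_ge) auto

lemma le_k_choose_aux: "k \<le> n \<Longrightarrow> 1 \<le> k \<Longrightarrow> n - k \<le> n choose k"
proof (induction n)
  case 0 then show ?case by simp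
next
  case (Suc n)
  show ?case
  proof (cases "k \<le> n")
    case True
    obtain k' where k': "k = Suc k'" using Suc.prems by (cases k) auto
    have "n choose k' \<ge> 1" using True k' by (simp add: Suc_le_eq)
    then show ?thesis using Suc.IH[OF True Suc.prems(2)] k' True by simp
  next
    case False then show ?thesis using Suc.prems by simp
  qed
qed

lemma le_k_choose: "1 \<le> k \<Longrightarrow> n \<le> k + (n choose k)"
  by (cases "k \<le> n") (use le_k_choose_aux[of k n] in auto)

lemma fact_exp: "real n ^ n / fact n \<le> exp (real n)"
proof -
  have "(\<Sum>i\<le>n. real n ^ i / fact i) \<le> exp (real n)"
    using summable_exp_generic[of "real n"]
    by (auto simp: exp_def divide_inverse ac_simps intro!: sum_le_suminf)
  moreover have "real n ^ n / fact n \<le> (\<Sum>i\<le>n. real n ^ i / fact i)"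
    by (rule member_le_sum) auto
  ultimately show ?thesis by linarith
qed

definition gfun :: "nat \<Rightarrow> real" where "gfun m = ln (real m) / ln (ln (real m))"
definition kk :: "nat \<Rightarrow> nat" where "kk m = nat \<lceil>2 * gfun m\<rceil>"

lemma asym:
  fixes \<beta> :: real
  assumes bpos: "\<beta> > 0"
  shows "\<exists>m0::nat. \<forall>m\<ge>m0. 1 \<le> kk m \<and> real (kk m) + 2 * real m * \<beta> ^ kk m / fact (kk m) \<le> 4 * gfun m"
proof -
  define gf where "gf = (\<lambda>x::real. ln x / ln (ln x))"
  have lim1: "filterlim gf at_top at_top" unfolding gf_def by real_asymp
  have lim2: "((\<lambda>x. x * (exp 1 * \<beta> / (2 * gf x)) powr (2 * gf x)) \<longlongrightarrow> 0) at_top"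
  proof -
    have "exp 1 * \<beta> > 0" using bpos by simp
    then have "((\<lambda>x::real. x * ((exp 1 * \<beta>) / (2*ln x/ln(ln x))) powr (2*ln x/ln(ln x))) \<longlongrightarrow> 0) at_top"
      by real_asymp
    then show ?thesis unfolding gf_def by (simp add: mult.assoc)
  qed
  have ev: "eventually (\<lambda>x. 1 \<le> gf x \<and> exp 1 * \<beta> \<le> gf x \<and>
      x * (exp 1 * \<beta> / (2 * gf x)) powr (2 * gf x) < 1/2) at_top"
  proof -
    have e1: "eventually (\<lambda>x. 1 \<le> gf x) at_top" using lim1 by (simp add: filterlim_at_top)
    have e2: "eventually (\<lambda>x. exp 1 * \<beta> \<le> gf x) at_top" using lim1 by (simp add: filterlim_at_top)
    have e3: "eventually (\<lambda>x. x * (exp 1 * \<beta> / (2 * gf x)) powr (2 * gf x) < 1/2) at_top"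
      using order_tendstoD(2)[OF lim2, of "1/2"] by simp
    show ?thesis using e1 e2 e3 by eventually_elim auto
  qed
  then obtain X0 where X0: "\<And>x. x \<ge> X0 \<Longrightarrow> 1 \<le> gf x \<and> exp 1 * \<beta> \<le> gf x \<and>
      x * (exp 1 * \<beta> / (2 * gf x)) powr (2 * gf x) < 1/2"
    by (auto simp: eventually_at_top_linorder)
  show ?thesis
  proof (intro exI[of _ "nat \<lceil>X0\<rceil>"] allI impI)
    fix m :: nat assume "nat \<lceil>X0\<rceil> \<le> m"
    then have "real m \<ge> X0" by linarith
    note H = X0[OF this]
    define g where "g = gfun m"
    have gg: "gf (real m) = g" unfolding gf_def g_def gfun_def by simp
    define x where "x = 2 * g"
    define k where "k = kk m"
    have g1: "1 \<le> g" and geb: "exp 1 * \<beta> \<le> g"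
      and gsmall: "real m * (exp 1 * \<beta> / x) powr x < 1/2"
      using H unfolding gg x_def by auto
    have x2: "x \<ge> 2" using g1 unfolding x_def by simp
    have kx: "real k \<ge> x" unfolding k_def kk_def x_def g_def by linarith
    have k1: "1 \<le> k" using kx x2 by linarith
    have kx1: "real k \<le> x + 1"
    proof -
      have "real k = real_of_int \<lceil>x\<rceil>" unfolding k_def kk_def x_def g_def using x2 unfolding x_def g_def by simp
      then show ?thesis by linarith
    qed
    have kpos: "real k > 0" using k1 by simp
    have eb: "exp 1 * \<beta> > 0" using bpos by simp
    have "\<beta> ^ k / fact k \<le> \<beta> ^ k * (exp (real k) / real k ^ k)"
    proof -
      have "real k ^ k / fact k \<le> exp (real k)" by (rule fact_exp)
      then have "1 / fact k \<le> exp (real k) / real k ^ k"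
        using kpos by (simp add: field_simps)
      then show ?thesis using bpos
        by (metis mult_left_mono times_divide_eq_right mult.right_neutral zero_le_power less_imp_le)
    qed
    also have "\<dots> = (exp 1 * \<beta> / real k) ^ k"
      using exp_of_nat_mult[of k "1::real"] by (simp add: power_divide power_mult_distrib field_simps)
    also have "\<dots> = (exp 1 * \<beta> / real k) powr (real k)"
      using eb kpos by (simp add: powr_realpow)
    also have "\<dots> \<le> (exp 1 * \<beta> / real k) powr x"
      using eb kpos kx geb x2 unfolding x_def by (intro powr_mono') (auto simp: field_simps)
    also have "\<dots> \<le> (exp 1 * \<beta> / x) powr x"
      using eb kpos kx x2 by (intro powr_mono2) (auto simp: frac_le)
    finally have B: "\<beta> ^ k / fact k \<le> (exp 1 * \<beta> / x) powr x" .
    have "2 * real m * \<beta> ^ k / fact k \<le> 2 * (real m * (exp 1 * \<beta> / x) powr x)"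
    proof -
      have "real m * (\<beta> ^ k / fact k) \<le> real m * (exp 1 * \<beta> / x) powr x"
        using B by (intro mult_left_mono) auto
      then show ?thesis by simp
    qed
    also have "\<dots> \<le> 1" using gsmall by simp
    finally have "2 * real m * \<beta> ^ k / fact k \<le> 1" .
    then show "1 \<le> kk m \<and> real (kk m) + 2 * real m * \<beta> ^ kk m / fact (kk m) \<le> 4 * gfun m"
      using k1 kx1 g1 unfolding k_def x_def g_def by linarith
  qed
qed

lemma load_moment:
  fixes tau :: "nat \<Rightarrow> nat \<Rightarrow> nat \<Rightarrow> nat \<Rightarrow> nat" and S D :: "nat \<Rightarrow> nat \<Rightarrow> nat"
    and dd :: "nat \<Rightarrow> nat \<Rightarrow> nat \<Rightarrow> nat" and \<beta> :: real
  assumes fin: "finite N" and bpos: "\<beta> > 0"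
    and win: "\<forall>j\<in>N. \<forall>c<mu j. \<forall>y r. (y < S j c \<or> S j c + D j c \<le> y) \<longrightarrow> tau j c y r = 0"
    and disj: "\<forall>j\<in>N. \<forall>c1<mu j. \<forall>c2<mu j. c1 \<noteq> c2 \<longrightarrow> S j c1 + D j c1 \<le> S j c2 \<or> S j c2 + D j c2 \<le> S j c1"
    and cap: "\<forall>j\<in>N. \<forall>c<mu j. \<forall>y. (\<Sum>r<m. tau j c y r) \<le> 1"
    and sums: "\<forall>j\<in>N. \<forall>c<mu j. \<forall>r<m. (\<Sum>y\<in>{S j c..<S j c + D j c}. tau j c y r) = dd j c r"
    and tot: "(\<Sum>j\<in>N. \<Sum>c<mu j. \<Sum>r<m. dd j c r) \<le> \<Delta>"
    and L: "L = nat \<lfloor>real \<Delta> / \<beta>\<rfloor>"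
  shows "(\<Sum>x\<in>PiE N (\<lambda>_. {0..L}). real ((\<Sum>j\<in>N. \<Sum>c<mu j. \<Sum>r<m. if x j \<le> t then tau j c (t - x j) r else 0) choose k))
     \<le> real (Suc L) ^ card N * \<beta> ^ k / fact k"
proof -
  define f where "f = (\<lambda>j v. if v \<le> t then (\<Sum>c<mu j. \<Sum>r<m. tau j c (t - v) r) else 0)"
  have fx: "(\<Sum>j\<in>N. \<Sum>c<mu j. \<Sum>r<m. if x j \<le> t then tau j c (t - x j) r else 0) = (\<Sum>j\<in>N. f j (x j))" for x
    unfolding f_def by (intro sum.cong refl) auto
  have f1: "\<forall>j\<in>N. \<forall>v. f j v \<le> 1"
  proof (intro ballI allI)
    fix j v assume j: "j \<in> N"
    show "f j v \<le> 1"
    proof (cases "v \<le> t")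
      case True
      have "(\<Sum>c<mu j. \<Sum>r<m. tau j c (t - v) r) \<le> 1"
        by (rule one_active[of "mu j" "S j" "D j"]) (use win disj cap j in auto)
      then show ?thesis unfolding f_def using True by simp
    qed (simp add: f_def)
  qed
  have ftot: "(\<Sum>v\<in>{0..L}. f j v) \<le> (\<Sum>c<mu j. \<Sum>r<m. dd j c r)" if j: "j \<in> N" for j
    unfolding f_def by (rule total_bound[of "mu j" "S j" "D j"]) (use win sums j in auto)
  define M where "M = real (Suc L)"
  have Mpos: "M > 0" unfolding M_def by simp
  have DM: "real \<Delta> \<le> \<beta> * M"
  proof -
    have "real \<Delta> / \<beta> < real_of_int \<lfloor>real \<Delta> / \<beta>\<rfloor> + 1" by linarith
    moreover have "real_of_int \<lfloor>real \<Delta> / \<beta>\<rfloor> = real L" using L bpos by simp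
    ultimately have "real \<Delta> / \<beta> \<le> M" unfolding M_def by simp
    then show ?thesis using bpos by (simp add: field_simps)
  qed
  define s where "s = (\<Sum>j\<in>N. real (\<Sum>v\<in>{0..L}. f j v) / real (Suc L))"
  have s0: "0 \<le> s" unfolding s_def by (intro sum_nonneg divide_nonneg_nonneg) (auto intro: sum_nonneg)
  have "s = (\<Sum>j\<in>N. real (\<Sum>v\<in>{0..L}. f j v)) / M"
    unfolding s_def M_def by (simp add: sum_divide_distrib)
  also have "\<dots> \<le> real (\<Sum>j\<in>N. \<Sum>c<mu j. \<Sum>r<m. dd j c r) / M"
  proof -
    have "(\<Sum>j\<in>N. (\<Sum>v\<in>{0..L}. f j v)) \<le> (\<Sum>j\<in>N. \<Sum>c<mu j. \<Sum>r<m. dd j c r)"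
      by (rule sum_mono) (rule ftot)
    then have "(\<Sum>j\<in>N. real (\<Sum>v\<in>{0..L}. f j v)) \<le> real (\<Sum>j\<in>N. \<Sum>c<mu j. \<Sum>r<m. dd j c r)"
    proof -
      assume h: "(\<Sum>j\<in>N. (\<Sum>v\<in>{0..L}. f j v)) \<le> (\<Sum>j\<in>N. \<Sum>c<mu j. \<Sum>r<m. dd j c r)"
      have "(\<Sum>j\<in>N. real (\<Sum>v\<in>{0..L}. f j v)) = real (\<Sum>j\<in>N. (\<Sum>v\<in>{0..L}. f j v))"
        by (rule of_nat_sum[symmetric])
      also have "\<dots> \<le> real (\<Sum>j\<in>N. \<Sum>c<mu j. \<Sum>r<m. dd j c r)"
        using h by (simp only: of_nat_le_iff)
      finally show ?thesis .
    qed
    then show ?thesis using Mpos by (intro divide_right_mono) auto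
  qed
  also have "\<dots> \<le> real \<Delta> / M"
  proof -
    have "real (\<Sum>j\<in>N. \<Sum>c<mu j. \<Sum>r<m. dd j c r) \<le> real \<Delta>" using tot by (simp only: of_nat_le_iff)
    then show ?thesis using Mpos by (intro divide_right_mono) auto
  qed
  also have "\<dots> \<le> \<beta>" using DM Mpos by (simp add: field_simps)
  finally have sb: "s \<le> \<beta>" .
  have "(\<Sum>x\<in>PiE N (\<lambda>_. {0..L}). real ((\<Sum>j\<in>N. f j (x j)) choose k)) \<le> M ^ card N * s ^ k / fact k"
    unfolding M_def s_def by (rule binom_moment[OF fin f1])
  also have "\<dots> \<le> M ^ card N * \<beta> ^ k / fact k"
    using s0 sb Mpos by (intro divide_right_mono mult_left_mono power_mono) auto
  finally show ?thesis unfolding fx M_def .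
qed

lemma alpha_le:
  assumes k1: "1 \<le> k"
  shows "real (alpha m N mu sigma x t) \<le> real k + (\<Sum>i<m. real (send_load m N mu sigma x t i choose k))
           + (\<Sum>i<m. real (recv_load m N mu sigma x t i choose k))"
proof -
  define T where "T = k + (\<Sum>i<m. send_load m N mu sigma x t i choose k) + (\<Sum>i<m. recv_load m N mu sigma x t i choose k)"
  have A: "send_load m N mu sigma x t i \<le> T" if "i < m" for i
  proof -
    have "(send_load m N mu sigma x t i choose k) \<le> (\<Sum>i<m. send_load m N mu sigma x t i choose k)"
      by (rule member_le_sum) (use that in auto)
    then show ?thesis using le_k_choose[OF k1, of "send_load m N mu sigma x t i"] unfolding T_def by linarith
  qed
  have B: "recv_load m N mu sigma x t i \<le> T" if "i < m" for i
  proof -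
    have "(recv_load m N mu sigma x t i choose k) \<le> (\<Sum>i<m. recv_load m N mu sigma x t i choose k)"
      by (rule member_le_sum) (use that in auto)
    then show ?thesis using le_k_choose[OF k1, of "recv_load m N mu sigma x t i"] unfolding T_def by linarith
  qed
  have "Max (insert 0 ({send_load m N mu sigma x t i | i. i < m} \<union> {recv_load m N mu sigma x t i | i. i < m})) \<le> T"
    by (rule Max.boundedI) (use A B in auto)
  moreover have "1 \<le> T" using k1 unfolding T_def by simp
  ultimately have "alpha m N mu sigma x t \<le> T" unfolding alpha_def by simp
  then have "real (alpha m N mu sigma x t) \<le> real T" by simp
  then show ?thesis unfolding T_def by simp
qed

lemma sched_facts:
  assumes "step1_schedule m N mu d E pos sigma" "j \<in> N"
  shows "bij_betw (pos j) {0..<mu j} {0..<mu j} \<and>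
        (\<forall>c<mu j.
           (\<forall>t s r. (t < start_slot m mu d pos j c \<or> start_slot m mu d pos j c + eff_size m (d j c) \<le> t) \<longrightarrow> sigma j c t s r = 0) \<and>
           (\<forall>s<m. \<forall>r<m. (\<Sum>t\<in>{start_slot m mu d pos j c..<start_slot m mu d pos j c + eff_size m (d j c)}. sigma j c t s r) = d j c s r) \<and>
           (\<forall>t. (\<forall>s<m. (\<Sum>r<m. sigma j c t s r) \<le> 1) \<and>
                (\<forall>r<m. (\<Sum>s<m. sigma j c t s r) \<le> 1)))"
proof -
  note h = bspec[OF assms(1)[unfolded step1_schedule_def] assms(2)]
  from h show ?thesis unfolding Let_def by (elim conjE) (intro conjI; assumption)
qed

theorem lemma4:
  fixes \<beta> :: real
  assumes "\<beta> > 1 / exp 1"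
  shows "\<exists>C m0. \<forall>m \<ge> m0. \<forall>(N :: nat set) mu d E pos sigma (t :: nat).
           finite N \<and> N \<noteq> {} \<and> step1_schedule m N mu d E pos sigma \<and>
           real t \<le> (real (Max (mu ` N)) + 1 / \<beta>) * real (total_eff m N mu d)
           \<longrightarrow> expected_alpha \<beta> m N mu d sigma t \<le> C * (ln (real m) / ln (ln (real m)))"
proof -
  have "1 / exp 1 > (0::real)" by simp
  then have bpos: "\<beta> > 0" using assms by linarith
  obtain m0 where H: "\<forall>m\<ge>m0. 1 \<le> kk m \<and> real (kk m) + 2 * real m * \<beta> ^ kk m / fact (kk m) \<le> 4 * gfun m"
    using asym[OF bpos] by blast
  show ?thesis
  proof (intro exI[of _ "4::real"] exI[of _ m0] allI impI)
    fix m :: nat and N :: "nat set" and mu :: "nat \<Rightarrow> nat" and d :: "nat \<Rightarrow> nat \<Rightarrow> nat \<Rightarrow> nat \<Rightarrow> nat"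
      and E :: "nat \<Rightarrow> (nat \<times> nat) set" and pos :: "nat \<Rightarrow> nat \<Rightarrow> nat"
      and sigma :: "nat \<Rightarrow> nat \<Rightarrow> nat \<Rightarrow> nat \<Rightarrow> nat \<Rightarrow> nat" and t :: nat
    assume m: "m0 \<le> m"
      and hyp: "finite N \<and> N \<noteq> {} \<and> step1_schedule m N mu d E pos sigma \<and>
           real t \<le> (real (Max (mu ` N)) + 1 / \<beta>) * real (total_eff m N mu d)"
    have fin: "finite N" and sched: "step1_schedule m N mu d E pos sigma" using hyp by auto
    define \<Delta> where "\<Delta> = total_eff m N mu d"
    define L where "L = max_delay \<beta> \<Delta>"
    define X where "X = PiE N (\<lambda>_::nat. {0..L})"
    define k where "k = kk m"
    define S where "S = (\<lambda>j c. start_slot m mu d pos j c)"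
    define D where "D = (\<lambda>j c. eff_size m (d j c))"
    have k1: "1 \<le> k" and Hk: "real k + 2 * real m * \<beta> ^ k / fact k \<le> 4 * gfun m"
      using H m unfolding k_def by auto
    have sch: "\<And>j. j \<in> N \<Longrightarrow> bij_betw (pos j) {0..<mu j} {0..<mu j} \<and>
        (\<forall>c<mu j.
           (\<forall>t s r. (t < S j c \<or> S j c + D j c \<le> t) \<longrightarrow> sigma j c t s r = 0) \<and>
           (\<forall>s<m. \<forall>r<m. (\<Sum>t\<in>{S j c..<S j c + D j c}. sigma j c t s r) = d j c s r) \<and>
           (\<forall>t. (\<forall>s<m. (\<Sum>r<m. sigma j c t s r) \<le> 1) \<and>
                (\<forall>r<m. (\<Sum>s<m. sigma j c t s r) \<le> 1)))"
      unfolding S_def D_def by (rule sched_facts[OF sched])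
    have disj: "\<forall>j\<in>N. \<forall>c1<mu j. \<forall>c2<mu j. c1 \<noteq> c2 \<longrightarrow> S j c1 + D j c1 \<le> S j c2 \<or> S j c2 + D j c2 \<le> S j c1"
    proof (intro ballI allI impI)
      fix j c1 c2 assume j: "j \<in> N" and c: "c1 < mu j" "c2 < mu j" "c1 \<noteq> c2"
      have "bij_betw (pos j) {0..<mu j} {0..<mu j}" using sch[OF j] by (rule conjunct1)
      then have inj: "inj_on (pos j) {0..<mu j}" by (rule bij_betw_imp_inj_on)
      have "pos j c1 \<noteq> pos j c2"
      proof
        assume eq: "pos j c1 = pos j c2"
        have "c1 \<in> {0..<mu j}" "c2 \<in> {0..<mu j}" using c(1,2) by simp_all
        then have "c1 = c2" by (rule inj_onD[OF inj eq])
        then show False using c(3) by (rule notE[rotated])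
      qed
      then have "pos j c1 < pos j c2 \<or> pos j c2 < pos j c1" by linarith
      then show "S j c1 + D j c1 \<le> S j c2 \<or> S j c2 + D j c2 \<le> S j c1"
      proof (elim disjE)
        assume "pos j c1 < pos j c2"
        then have "start_slot m mu d pos j c1 + eff_size m (d j c1) \<le> start_slot m mu d pos j c2"
          by (rule window_order[where mu=mu and j=j and pos=pos and m=m and d=d, OF c(1) c(2)])
        then show ?thesis unfolding S_def D_def by (rule disjI1)
      next
        assume "pos j c2 < pos j c1"
        then have "start_slot m mu d pos j c2 + eff_size m (d j c2) \<le> start_slot m mu d pos j c1"
          by (rule window_order[where mu=mu and j=j and pos=pos and m=m and d=d, OF c(2) c(1)])
        then show ?thesis unfolding S_def D_def by (rule disjI2)
      qed
    qed
    have LL: "L = nat \<lfloor>real \<Delta> / \<beta>\<rfloor>" unfolding L_def max_delay_def ..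
    define B where "B = real (Suc L) ^ card N * \<beta> ^ k / fact k"
    have swap3: "(\<Sum>r<m. \<Sum>j\<in>N. \<Sum>c<mu j. g j c r) = (\<Sum>j\<in>N. \<Sum>c<mu j. \<Sum>r<m. g j c r)" for g :: "nat \<Rightarrow> nat \<Rightarrow> nat \<Rightarrow> nat"
    proof -
      have "(\<Sum>r<m. \<Sum>j\<in>N. \<Sum>c<mu j. g j c r) = (\<Sum>j\<in>N. \<Sum>r<m. \<Sum>c<mu j. g j c r)" by (rule sum.swap)
      also have "\<dots> = (\<Sum>j\<in>N. \<Sum>c<mu j. \<Sum>r<m. g j c r)" by (intro sum.cong refl sum.swap)
      finally show ?thesis .
    qed
    have SB: "(\<Sum>x\<in>X. real (send_load m N mu sigma x t i choose k)) \<le> B" if i: "i < m" for i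
    proof -
      have tot: "(\<Sum>j\<in>N. \<Sum>c<mu j. \<Sum>r<m. d j c i r) \<le> \<Delta>"
        using eff_row[OF i, of "\<lambda>s r. \<Sum>j\<in>N. \<Sum>c<mu j. d j c s r"] swap3[of "\<lambda>j c r. d j c i r"]
        unfolding \<Delta>_def total_eff_def by simp
      show ?thesis unfolding send_load_def X_def B_def
        by (rule load_moment[where tau="\<lambda>j c y r. sigma j c y i r" and S=S and D=D
              and dd="\<lambda>j c r. d j c i r" and \<Delta>=\<Delta>, OF fin bpos _ disj _ _ tot LL])
           (use sch i in auto)
    qed
    have RB: "(\<Sum>x\<in>X. real (recv_load m N mu sigma x t i choose k)) \<le> B" if i: "i < m" for i
    proof -
      have tot: "(\<Sum>j\<in>N. \<Sum>c<mu j. \<Sum>s<m. d j c s i) \<le> \<Delta>"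
        using eff_col[OF i, of "\<lambda>s r. \<Sum>j\<in>N. \<Sum>c<mu j. d j c s r"] swap3[of "\<lambda>j c s. d j c s i"]
        unfolding \<Delta>_def total_eff_def by simp
      show ?thesis unfolding recv_load_def X_def B_def
        by (rule load_moment[where tau="\<lambda>j c y s. sigma j c y s i" and S=S and D=D
              and dd="\<lambda>j c s. d j c s i" and \<Delta>=\<Delta>, OF fin bpos _ disj _ _ tot LL])
           (use sch i in auto)
    qed
    define M where "M = real (Suc L) ^ card N"
    have cardX: "real (card X) = M"
      unfolding X_def M_def using fin by (simp add: card_PiE)
    have Mpos: "M > 0" unfolding M_def by simp
    have "(\<Sum>x\<in>X. real (alpha m N mu sigma x t)) \<le>
        (\<Sum>x\<in>X. real k + (\<Sum>i<m. real (send_load m N mu sigma x t i choose k))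
           + (\<Sum>i<m. real (recv_load m N mu sigma x t i choose k)))"
      by (rule sum_mono) (rule alpha_le[OF k1])
    also have "\<dots> = real (card X) * real k + (\<Sum>i<m. \<Sum>x\<in>X. real (send_load m N mu sigma x t i choose k))
           + (\<Sum>i<m. \<Sum>x\<in>X. real (recv_load m N mu sigma x t i choose k))"
    proof -
      have e1: "(\<Sum>x\<in>X. \<Sum>i<m. real (send_load m N mu sigma x t i choose k)) = (\<Sum>i<m. \<Sum>x\<in>X. real (send_load m N mu sigma x t i choose k))"
        by (rule sum.swap)
      have e2: "(\<Sum>x\<in>X. \<Sum>i<m. real (recv_load m N mu sigma x t i choose k)) = (\<Sum>i<m. \<Sum>x\<in>X. real (recv_load m N mu sigma x t i choose k))"
        by (rule sum.swap)
      have e3: "(\<Sum>x\<in>X. real k) = real (card X) * real k" by simp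
      show ?thesis by (simp only: sum.distrib e1 e2 e3)
    qed
    also have "\<dots> \<le> real (card X) * real k + (\<Sum>i<m. B) + (\<Sum>i<m. B)"
      using SB RB by (intro add_mono sum_mono order_refl) auto
    also have "\<dots> = M * (real k + 2 * real m * \<beta> ^ k / fact k)"
      unfolding cardX B_def M_def by (simp add: field_simps)
    finally have sumb: "(\<Sum>x\<in>X. real (alpha m N mu sigma x t)) \<le> M * (real k + 2 * real m * \<beta> ^ k / fact k)" .
    have "expected_alpha \<beta> m N mu d sigma t = (\<Sum>x\<in>X. real (alpha m N mu sigma x t)) / M"
      unfolding expected_alpha_def Let_def cardX[symmetric] X_def L_def \<Delta>_def ..
    also have "\<dots> \<le> real k + 2 * real m * \<beta> ^ k / fact k"
      using sumb Mpos by (simp add: divide_le_eq mult.commute)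
    also have "\<dots> \<le> 4 * gfun m" by (rule Hk)
    finally show "expected_alpha \<beta> m N mu d sigma t \<le> 4 * (ln (real m) / ln (ln (real m)))"
      unfolding gfun_def .
  qed
qed

end
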